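(* Let $G=(V,E)$ be a connected graph with $n=|V|$ nodes and let $\mathbf{A}\in\mathbb{R}^{n\times n}$ be a graph shift operator for $G$. Let $\mathbf{W}\in\mathbb{R}^{c\times c}$, $\mathbf{B}\in\mathbb{R}^{c'\times c}$, inputs $\mathbf{U}_t\in\mathbb{R}^{n\times c'}$, and consider the recurrence $\mathbf{X}_{t+1}=\mathbf{A}\mathbf{X}_t\mathbf{W}+\mathbf{U}_{t+1}\mathbf{B}$, $\mathbf{X}_t\in\mathbb{R}^{n\times c}$. Define the global sensitivity $\mathcal{S}(t-s)=\max_{i,j}\left\|\frac{\partial \mathbf{X}_t^{(i)}}{\partial \mathbf{X}_s^{(j)}}\right\|$. Then for all $s\le t$, $$\frac{\rho(\mathbf{A})^{t-s}}{|V|}\,\|\mathbf{W}^{t-s}\|\le\mathcal{S}(t-s),$$ where $\rho(\mathbf{A})$ is the spectral radius of $\mathbf{A}$. In particular, if $G$ is undirected and $\mathbf{A}=\mathbf{D}^{-1/2}(\tilde{\mathbf{A}}+\mathbf{I})\mathbf{D}^{-1/2}$, with $\tilde{\mathbf{A}}$ the adjacency matrix and $\mathbf{D}$ the diagonal degree matrix of $\tilde{\mathbf{A}}+\mathbf{I}$, then $\frac{1}{|V|}\|\mathbf{W}^{t-s}\|\le\mathcal{S}(t-s)$.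
   Context: $\mathbf{X}_t^{(i)}\in\mathbb{R}^{1\times c}$ denotes the $i$-th row of $\mathbf{X}_t$, regarded as a function of $\mathbf{X}_s$ through the recurrence with inputs held fixed; the Jacobian of row vectors is the $c\times c$ matrix with $(p,q)$ entry $\partial y_p/\partial x_q$. $\|\cdot\|$ denotes the spectral norm and the maximum is over all pairs of nodes $i,j$. *)

theory Defs
  imports "HOL-Analysis.Analysis"
begin

primrec mat_pow :: "real^'n^'n \<Rightarrow> nat \<Rightarrow> real^'n^'n" where
  "mat_pow M 0 = mat 1"
| "mat_pow M (Suc k) = M ** mat_pow M k"

definition spec_norm :: "real^'m^'k \<Rightarrow> real" where
  "spec_norm M = onorm (\<lambda>x. M *v x)"

definition spectral_radius :: "real^'n^'n \<Rightarrow> real" where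
  "spectral_radius A = Max {cmod z | z. \<exists>v :: complex^'n. v \<noteq> 0 \<and>
      (\<chi> i j. complex_of_real (A $ i $ j)) *v v = z *s v}"

text \<open>Graphs on the finite node type 'n, given by an edge relation E (E i j: edge from i to j).\<close>
definition graph_connected :: "('n \<Rightarrow> 'n \<Rightarrow> bool) \<Rightarrow> bool" where
  "graph_connected E \<longleftrightarrow> (\<forall>u v. (\<lambda>x y. E x y \<or> E y x)\<^sup>*\<^sup>* u v)"

definition graph_shift_operator :: "('n \<Rightarrow> 'n \<Rightarrow> bool) \<Rightarrow> real^'n^'n \<Rightarrow> bool" where
  "graph_shift_operator E A \<longleftrightarrow> (\<forall>i j. i \<noteq> j \<and> \<not> E i j \<and> \<not> E j i \<longrightarrow> A $ i $ j = 0)"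

definition undirected_graph :: "('n \<Rightarrow> 'n \<Rightarrow> bool) \<Rightarrow> bool" where
  "undirected_graph E \<longleftrightarrow> (\<forall>i j. E i j \<longleftrightarrow> E j i) \<and> (\<forall>i. \<not> E i i)"

definition adjacency :: "('n \<Rightarrow> 'n \<Rightarrow> bool) \<Rightarrow> real^'n^'n" where
  "adjacency E = (\<chi> i j. if E i j then 1 else 0)"

definition degree_matrix :: "real^'n^'n \<Rightarrow> real^'n^'n" where
  "degree_matrix M = (\<chi> i j. if i = j then (\<Sum>k\<in>UNIV. M $ i $ k) else 0)"

definition diag_inv_sqrt :: "real^'n^'n \<Rightarrow> real^'n^'n" where
  "diag_inv_sqrt D = (\<chi> i j. if i = j then 1 / sqrt (D $ i $ i) else 0)"

definition sym_norm_adj :: "('n \<Rightarrow> 'n \<Rightarrow> bool) \<Rightarrow> real^'n^'n" where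
  "sym_norm_adj E = (let M = adjacency E + mat 1; Dm = diag_inv_sqrt (degree_matrix M)
                      in Dm ** M ** Dm)"

text \<open>The recurrence X_{t+1} = A X_t W + U_{t+1} B started at time s from X_s = X0;
  rec_state A W B U s X0 k is X_{s+k}.\<close>
primrec rec_state :: "real^'n^'n \<Rightarrow> real^'c^'c \<Rightarrow> real^'c^'d \<Rightarrow> (nat \<Rightarrow> real^'d^'n)
     \<Rightarrow> nat \<Rightarrow> real^'c^'n \<Rightarrow> nat \<Rightarrow> real^'c^'n" where
  "rec_state A W B U s X0 0 = X0"
| "rec_state A W B U s X0 (Suc k) = A ** rec_state A W B U s X0 k ** W + U (s + Suc k) ** B"

text \<open>Jacobian (c x c, entry (p,q) = d y_p / d x_q) of row i of X_t with respect to row j of X_s,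
  evaluated at X_s = X0, inputs fixed.\<close>
definition row_jacobian :: "real^'n^'n \<Rightarrow> real^'c^'c \<Rightarrow> real^'c^'d \<Rightarrow> (nat \<Rightarrow> real^'d^'n)
     \<Rightarrow> nat \<Rightarrow> nat \<Rightarrow> real^'c^'n \<Rightarrow> 'n \<Rightarrow> 'n \<Rightarrow> real^'c^'c" where
  "row_jacobian A W B U s t X0 i j = (THE J.
     ((\<lambda>y. rec_state A W B U s (\<chi> k. if k = j then y else X0 $ k) (t - s) $ i)
        has_derivative (\<lambda>h. J *v h)) (at (X0 $ j)))"

definition sensitivity :: "real^'n^'n \<Rightarrow> real^'c^'c \<Rightarrow> real^'c^'d \<Rightarrow> (nat \<Rightarrow> real^'d^'n)
     \<Rightarrow> nat \<Rightarrow> nat \<Rightarrow> real^'c^'n \<Rightarrow> real" where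
  "sensitivity A W B U s t X0 = Max {spec_norm (row_jacobian A W B U s t X0 i j) | i j. True}"

end

theory Submission
  imports Defs "Jordan_Normal_Form.Char_Poly"
begin

lemma eig_set_finite_nonempty:
  fixes M :: "complex^'n::finite^'n"
  shows "finite {z. \<exists>v :: complex^'n. v \<noteq> 0 \<and> M *v v = z *s v}"
    and "{z. \<exists>v :: complex^'n. v \<noteq> 0 \<and> M *v v = z *s v} \<noteq> {}"
proof -
  let ?S = "{z. \<exists>v :: complex^'n. v \<noteq> 0 \<and> M *v v = z *s v}"
  define n where "n = CARD('n)"
  obtain f where f: "bij_betw f {0..<n} (UNIV :: 'n set)"
    using ex_bij_betw_nat_finite[of "UNIV :: 'n set"] unfolding n_def by auto
  define g where "g = inv_into {0..<n} f"
  have fg: "f (g x) = x" for x using f unfolding g_def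
    by (meson UNIV_I bij_betw_inv_into_right)
  have gl: "g x < n" for x using f unfolding g_def
    by (metis UNIV_I atLeastLessThan_iff bij_betw_def inv_into_into)
  have gf: "i < n \<Longrightarrow> g (f i) = i" for i using f unfolding g_def
    by (simp add: bij_betw_inv_into_left)
  have reidx: "(\<Sum>j<n. h (f j)) = (\<Sum>x\<in>UNIV. h x)" for h :: "'n \<Rightarrow> complex"
    using sum.reindex_bij_betw[OF f, of h] by (simp add: lessThan_atLeast0)
  define M' where "M' = Matrix.mat n n (\<lambda>(i,j). M $ f i $ f j)"
  have M'c: "M' \<in> carrier_mat n n" unfolding M'_def by simp
  have spec: "Collect (eigenvalue M') = {k. poly (char_poly M') k = 0}"
    using eigenvalue_root_char_poly[OF M'c] by auto
  have d: "degree (char_poly M') = n" "coeff (char_poly M') n = 1"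
    using degree_monic_char_poly[OF M'c] by auto
  have sub: "?S \<subseteq> Collect (eigenvalue M')"
  proof
    fix z assume "z \<in> ?S"
    then obtain v :: "complex^'n" where v: "v \<noteq> 0" "M *v v = z *s v" by auto
    define v' where "v' = Matrix.vec n (\<lambda>i. v $ f i)"
    have "v' \<in> carrier_vec n" unfolding v'_def by simp
    moreover have "v' \<noteq> 0\<^sub>v n"
    proof
      assume "v' = 0\<^sub>v n"
      then have "v $ f i = 0" if "i < n" for i using that
        unfolding v'_def by (metis index_vec index_zero_vec(1))
      then have "v $ x = 0" for x using gl fg by metis
      then show False using v(1) by (simp add: Finite_Cartesian_Product.vec_eq_iff)
    qed
    moreover have "M' *\<^sub>v v' = z \<cdot>\<^sub>v v'"
    proof (rule eq_vecI)
      fix i assume i: "i < dim_vec (z \<cdot>\<^sub>v v')"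
      then have i': "i < n" unfolding v'_def by simp
      have "(M' *\<^sub>v v') $ i = (\<Sum>j<n. M $ f i $ f j * v $ f j)"
        using i' unfolding M'_def v'_def
        by (simp add: mult_mat_vec_def scalar_prod_def lessThan_atLeast0)
      also have "\<dots> = (M *v v) $ f i"
        using reidx[of "\<lambda>x. M $ f i $ x * v $ x"] by (simp add: matrix_vector_mult_def)
      also have "\<dots> = (z \<cdot>\<^sub>v v') $ i" using v(2) i' unfolding v'_def by simp
      finally show "(M' *\<^sub>v v') $ i = (z \<cdot>\<^sub>v v') $ i" .
    next
      show "dim_vec (M' *\<^sub>v v') = dim_vec (z \<cdot>\<^sub>v v')" unfolding M'_def v'_def by simp
    qed
    ultimately show "z \<in> Collect (eigenvalue M')"
      unfolding eigenvalue_def eigenvector_def using M'c by auto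
  qed
  have "char_poly M' \<noteq> 0" using d(2) by auto
  then have "finite (Collect (eigenvalue M'))" unfolding spec by (rule poly_roots_finite)
  then show "finite ?S" using sub finite_subset by blast
  have "n > 0" unfolding n_def by simp
  then have "\<not> constant (poly (char_poly M'))" using d(1) by (simp add: constant_degree)
  then obtain z where "poly (char_poly M') z = 0" using fundamental_theorem_of_algebra by blast
  then have "z \<in> Collect (eigenvalue M')" unfolding spec by simp
  then obtain v' where v': "v' \<in> carrier_vec n" "v' \<noteq> 0\<^sub>v n" "M' *\<^sub>v v' = z \<cdot>\<^sub>v v'"
    unfolding eigenvalue_def eigenvector_def using M'c by auto
  define v :: "complex^'n" where "v = (\<chi> x. v' $ g x)"
  have "v \<noteq> 0"
  proof
    assume "v = 0"
    then have "v' $ i = 0" if "i < n" for i using that gf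
      unfolding v_def by (metis vec_lambda_beta zero_index)
    then have "v' = 0\<^sub>v n" using v'(1) by (intro eq_vecI) auto
    then show False using v'(2) by simp
  qed
  moreover have "M *v v = z *s v"
  proof -
    have "(M *v v) $ x = (z *s v) $ x" for x
    proof -
      have "(M *v v) $ x = (\<Sum>y\<in>UNIV. M $ x $ y * v' $ g y)"
        unfolding v_def by (simp add: matrix_vector_mult_def)
      also have "\<dots> = (\<Sum>j<n. M $ f (g x) $ f j * v' $ g (f j))"
        using reidx[of "\<lambda>y. M $ x $ y * v' $ g y"] fg by simp
      also have "\<dots> = (\<Sum>j<n. M $ f (g x) $ f j * v' $ j)"
        by (intro sum.cong) (auto simp: gf)
      also have "\<dots> = (M' *\<^sub>v v') $ g x"
        using gl[of x] v'(1) unfolding M'_def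
        by (simp add: mult_mat_vec_def scalar_prod_def lessThan_atLeast0)
      also have "\<dots> = (z *s v) $ x" using v'(1) gl[of x] unfolding v'(3) v_def by simp
      finally show ?thesis .
    qed
    then show ?thesis by (simp add: Finite_Cartesian_Product.vec_eq_iff)
  qed
  ultimately show "?S \<noteq> {}" by auto
qed


no_notation Matrix.vec_index (infixl "$" 100)



lemma spec_norm_le_transpose:
  fixes M :: "real^'m::finite^'k::finite"
  shows "spec_norm M \<le> spec_norm (transpose M)"
  unfolding spec_norm_def
proof (rule onorm_le)
  fix x :: "real^'m"
  let ?T = "onorm (\<lambda>x. transpose M *v x)"
  have "norm (M *v x) ^ 2 = inner (M *v x) (M *v x)" by (rule power2_norm_eq_inner)
  also have "\<dots> = inner ((M *v x) v* M) x" by (rule dot_lmul_matrix[symmetric])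
  also have "\<dots> = inner (transpose M *v (M *v x)) x" by (simp only: transpose_matrix_vector)
  also have "\<dots> \<le> norm (transpose M *v (M *v x)) * norm x" by (rule norm_cauchy_schwarz)
  also have "\<dots> \<le> ?T * norm (M *v x) * norm x"
    by (rule mult_right_mono[OF onorm[OF matrix_vector_mul_bounded_linear]]) simp
  finally have "norm (M *v x) ^ 2 \<le> ?T * norm (M *v x) * norm x" .
  then have *: "norm (M *v x) * norm (M *v x) \<le> (?T * norm x) * norm (M *v x)"
    by (simp only: power2_eq_square mult.commute mult.left_commute)
  show "norm (M *v x) \<le> ?T * norm x"
  proof (cases "norm (M *v x) = 0")
    case True
    have "0 \<le> ?T" by (rule onorm_pos_le[OF matrix_vector_mul_bounded_linear])
    then show ?thesis unfolding True by (rule mult_nonneg_nonneg[OF _ norm_ge_zero])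
  next
    case False
    then have pos: "norm (M *v x) > 0" using norm_ge_zero[of "M *v x"] by linarith
    show ?thesis by (rule mult_right_le_imp_le[OF * pos])
  qed
qed

lemma mat_pow_Suc': "mat_pow M (Suc k) = mat_pow M k ** M"
proof (induction k)
  case 0 then show ?case by simp
next
  case (Suc k)
  have "mat_pow M (Suc (Suc k)) = M ** mat_pow M (Suc k)" by (rule mat_pow.simps(2))
  also have "\<dots> = M ** (mat_pow M k ** M)" by (subst Suc) (rule refl)
  also have "\<dots> = mat_pow M (Suc k) ** M" by (simp only: mat_pow.simps(2) matrix_mul_assoc)
  finally show ?case .
qed

lemma matrix_diff_ldistrib: "(A::'a::ring_1^'n^'m) ** (B - C) = A ** B - A ** C"
  by (simp add: matrix_matrix_mult_def Finite_Cartesian_Product.vec_eq_iff sum_subtractf right_diff_distrib)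

lemma matrix_diff_rdistrib: "((B::'a::ring_1^'n^'m) - C) ** A = B ** A - C ** A"
  by (simp add: matrix_matrix_mult_def Finite_Cartesian_Product.vec_eq_iff sum_subtractf left_diff_distrib)

lemma rec_state_diff:
  "rec_state A W B U s X k - rec_state A W B U s Y k = mat_pow A k ** (X - Y) ** mat_pow W k"
proof (induction k)
  case 0 then show ?case by (simp only: rec_state.simps(1) mat_pow.simps(1) matrix_mul_lid matrix_mul_rid)
next
  case (Suc k)
  have "rec_state A W B U s X (Suc k) - rec_state A W B U s Y (Suc k)
     = A ** (rec_state A W B U s X k - rec_state A W B U s Y k) ** W"
    by (simp only: rec_state.simps(2) add_diff_cancel_right matrix_diff_ldistrib matrix_diff_rdistrib)
  also have "\<dots> = A ** (mat_pow A k ** (X - Y) ** mat_pow W k) ** W" by (simp only: Suc)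
  also have "\<dots> = mat_pow A (Suc k) ** (X - Y) ** mat_pow W (Suc k)"
  proof -
    have a: "mat_pow A (Suc k) = A ** mat_pow A k" by simp
    have w: "mat_pow W (Suc k) = mat_pow W k ** W" by (rule mat_pow_Suc')
    show ?thesis by (simp only: a w matrix_mul_assoc)
  qed
  finally show ?case .
qed

lemma sum_if_single: fixes f :: "'n::finite \<Rightarrow> real" shows "(\<Sum>k\<in>UNIV. f k * (if k = j then c else 0)) = f j * (c::real)"
proof -
  have h: "(\<lambda>k. f k * (if k = j then c else 0)) = (\<lambda>k. if k = j then f k * c else 0)" by auto
  show ?thesis by (subst h) (simp only: sum.delta finite UNIV_I if_True)
qed

lemma row_single:
  fixes P :: "real^'n::finite^'n" and Q :: "real^'c::finite^'c"
  shows "(P ** (\<chi> k. if k = j then d else 0) ** Q) $ i = (P $ i $ j) *\<^sub>R (transpose Q *v d)"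
proof -
  have e: "(if k = j then d else 0) $ q = (if k = j then d $ q else 0)" for k q
    by simp
  have r: "(P ** (\<chi> k. if k = j then d else 0)) $ i = (P $ i $ j) *\<^sub>R d"
    unfolding Finite_Cartesian_Product.vec_eq_iff matrix_matrix_mult_def
    by (simp add: e sum_if_single)
  have g: "(R ** Q) $ i = transpose Q *v (R $ i)" for R :: "real^'c^'n"
    by (simp add: Finite_Cartesian_Product.vec_eq_iff matrix_matrix_mult_def matrix_vector_mult_def transpose_def mult.commute)
  show ?thesis by (simp only: g r matrix_vector_mult_scaleR)
qed

lemma row_jacobian_eq:
  fixes A :: "real^'n::finite^'n" and W :: "real^'c::finite^'c"
  shows "row_jacobian A W B U s t X0 i j = (mat_pow A (t - s) $ i $ j) *\<^sub>R transpose (mat_pow W (t - s))"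
proof -
  let ?k = "t - s"
  let ?X = "\<lambda>y. (\<chi> k. if k = j then y else X0 $ k)"
  let ?f = "\<lambda>y. rec_state A W B U s (?X y) ?k $ i"
  let ?J = "(mat_pow A ?k $ i $ j) *\<^sub>R transpose (mat_pow W ?k)"
  define c where "c = ?f (X0 $ j)"
  have X0eq: "?X (X0 $ j) = X0" by (simp add: Finite_Cartesian_Product.vec_eq_iff)
  have feq: "?f y = c + ?J *v (y - X0 $ j)" for y
  proof -
    have dif: "?X y - X0 = (\<chi> k. if k = j then y - X0 $ j else 0)"
      by (simp add: Finite_Cartesian_Product.vec_eq_iff)
    have "?f y - c = (rec_state A W B U s (?X y) ?k - rec_state A W B U s X0 ?k) $ i"
      unfolding c_def X0eq by (rule vector_minus_component[symmetric])
    also have "\<dots> = (mat_pow A ?k ** (\<chi> k. if k = j then y - X0 $ j else 0) ** mat_pow W ?k) $ i"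
      unfolding rec_state_diff dif ..
    also have "\<dots> = ?J *v (y - X0 $ j)"
      unfolding row_single scaleR_matrix_vector_assoc ..
    finally have "?f y - c = ?J *v (y - X0 $ j)" .
    then have "?f y = ?J *v (y - X0 $ j) + c" by (rule diff_eq_eq[THEN iffD1])
    then show ?thesis unfolding add.commute[of c] .
  qed
  have fe: "?f = (\<lambda>y. ?J *v y + (c - ?J *v X0 $ j))"
    by (rule ext) (simp only: feq matrix_vector_mult_diff_distrib add_diff_eq add.commute)
  have der: "(?f has_derivative (\<lambda>h. ?J *v h)) (at (X0 $ j))"
  proof -
    have "((\<lambda>y. ?J *v y) has_derivative (\<lambda>h. ?J *v h)) (at (X0 $ j))"
      by (rule bounded_linear_imp_has_derivative) simp
    then have "((\<lambda>y. ?J *v y + (c - ?J *v X0 $ j)) has_derivative (\<lambda>h. ?J *v h)) (at (X0 $ j))"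
      by (rule has_derivative_add_const)
    then show ?thesis unfolding fe .
  qed
  show ?thesis
    unfolding row_jacobian_def
  proof (rule the_equality)
    show "(?f has_derivative (\<lambda>h. ?J *v h)) (at (X0 $ j))" by (rule der)
  next
    fix J assume "(?f has_derivative (\<lambda>h. J *v h)) (at (X0 $ j))"
    then have eq: "(\<lambda>h. J *v h) = (\<lambda>h. ?J *v h)" using der by (rule has_derivative_unique)
    have "\<forall>h. J *v h = ?J *v h"
    proof
      fix h show "J *v h = ?J *v h" using fun_cong[OF eq, of h] by (simp only:)
    qed
    then show "J = ?J" by (rule matrix_eq[THEN iffD2])
  qed
qed

lemma sens_ge:
  fixes A :: "real^'n::finite^'n" and W :: "real^'c::finite^'c"
  shows "\<bar>mat_pow A (t - s) $ i $ j\<bar> * spec_norm (mat_pow W (t - s)) \<le> sensitivity A W B U s t X0"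
proof -
  let ?g = "\<lambda>i j. spec_norm (row_jacobian A W B U s t X0 i j)"
  have fin: "finite {?g i j | i j. True}"
  proof -
    have "{?g i j | i j. True} = (\<lambda>(i,j). ?g i j) ` UNIV" by auto
    then show ?thesis by simp
  qed
  have "?g i j = \<bar>mat_pow A (t - s) $ i $ j\<bar> * spec_norm (transpose (mat_pow W (t - s)))"
  proof -
    have "(\<lambda>h. row_jacobian A W B U s t X0 i j *v h) = (\<lambda>h. (mat_pow A (t - s) $ i $ j) *\<^sub>R (transpose (mat_pow W (t - s)) *v h))"
      unfolding row_jacobian_eq by (rule ext) (simp only: scaleR_matrix_vector_assoc)
    then show ?thesis unfolding spec_norm_def
      by (simp only: onorm_scaleR[OF matrix_vector_mul_bounded_linear])
  qed
  moreover have "?g i j \<le> sensitivity A W B U s t X0"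
    unfolding sensitivity_def by (rule Max_ge[OF fin]) blast
  moreover have "\<bar>mat_pow A (t - s) $ i $ j\<bar> * spec_norm (mat_pow W (t - s))
      \<le> \<bar>mat_pow A (t - s) $ i $ j\<bar> * spec_norm (transpose (mat_pow W (t - s)))"
    by (rule mult_left_mono[OF spec_norm_le_transpose]) simp
  ultimately show ?thesis by linarith
qed



definition cpx :: "real^'m^'k \<Rightarrow> complex^'m^'k" where
  "cpx P = (\<chi> i j. complex_of_real (P $ i $ j))"

lemma cpx_mult: "cpx ((P::real^'m::finite^'k) ** (Q::real^'l^'m)) = cpx P ** cpx Q"
  by (simp add: cpx_def Finite_Cartesian_Product.vec_eq_iff matrix_matrix_mult_def)

lemma cpx_one: "cpx (Finite_Cartesian_Product.mat 1 :: real^'n^'n) = Finite_Cartesian_Product.mat 1"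
  by (simp add: cpx_def Finite_Cartesian_Product.vec_eq_iff Finite_Cartesian_Product.mat_def)

lemma cmat_smult: "(M::complex^'m::finite^'k) *v (c *s v) = c *s (M *v v)"
  by (simp add: Finite_Cartesian_Product.vec_eq_iff matrix_vector_mult_def sum_distrib_left mult.left_commute)

lemma cpx_pow_eig:
  fixes A :: "real^'n::finite^'n"
  assumes "cpx A *v v = z *s v"
  shows "cpx (mat_pow A k) *v v = z ^ k *s v"
proof (induction k)
  case 0 then show ?case by (simp add: cpx_one)
next
  case (Suc k)
  have "cpx (mat_pow A (Suc k)) *v v = cpx A *v (cpx (mat_pow A k) *v v)"
    by (simp add: cpx_mult matrix_vector_mul_assoc)
  also have "\<dots> = z ^ k *s (z *s v)" using Suc assms by (simp add: cmat_smult)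
  also have "\<dots> = z ^ Suc k *s v" by (simp add: vector_smult_assoc mult.commute)
  finally show ?case .
qed

lemma finite_max_ex:
  fixes f :: "'n::finite \<Rightarrow> real"
  obtains i where "\<And>j. f j \<le> f i"
proof -
  have "Max (range f) \<in> range f" by (rule Max_in) auto
  then obtain i where fi: "f i = Max (range f)" by (metis rangeE)
  show ?thesis
  proof (rule that)
    fix j show "f j \<le> f i" unfolding fi by (rule Max_ge) auto
  qed
qed

lemma eig_bound:
  fixes A :: "real^'n::finite^'n"
  assumes v: "v \<noteq> 0" and ev: "cpx A *v v = z *s v"
  shows "\<exists>i j. cmod z ^ k \<le> real CARD('n) * \<bar>mat_pow A k $ i $ j\<bar>"
proof -
  let ?P = "mat_pow A k"
  obtain i where i: "\<And>j. cmod (v $ j) \<le> cmod (v $ i)" using finite_max_ex[of "\<lambda>i. cmod (v $ i)"] by blast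
  obtain j where j: "\<And>l. \<bar>?P $ i $ l\<bar> \<le> \<bar>?P $ i $ j\<bar>" using finite_max_ex[of "\<lambda>l. \<bar>?P $ i $ l\<bar>"] by blast
  have mpos: "cmod (v $ i) > 0"
  proof -
    obtain x where "v $ x \<noteq> 0" using v by (metis Finite_Cartesian_Product.vec_eq_iff zero_index)
    then show ?thesis using i[of x] by (meson norm_ge_zero norm_le_zero_iff order_le_less_trans not_le)
  qed
  have "cmod z ^ k * cmod (v $ i) = cmod ((cpx ?P *v v) $ i)"
    using cpx_pow_eig[OF ev, of k] by (simp add: norm_mult norm_power)
  also have "\<dots> = cmod (\<Sum>l\<in>UNIV. complex_of_real (?P $ i $ l) * v $ l)"
    by (simp add: cpx_def matrix_vector_mult_def)
  also have "\<dots> \<le> (\<Sum>l\<in>UNIV. cmod (complex_of_real (?P $ i $ l) * v $ l))"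
    by (rule norm_sum)
  also have "\<dots> = (\<Sum>l\<in>UNIV. \<bar>?P $ i $ l\<bar> * cmod (v $ l))"
    by (simp add: norm_mult)
  also have "\<dots> \<le> (\<Sum>l\<in>(UNIV::'n set). \<bar>?P $ i $ j\<bar> * cmod (v $ i))"
    by (rule sum_mono, rule mult_mono) (auto intro: i j)
  also have "\<dots> = (real CARD('n) * \<bar>?P $ i $ j\<bar>) * cmod (v $ i)"
    by simp
  finally have "cmod z ^ k * cmod (v $ i) \<le> (real CARD('n) * \<bar>?P $ i $ j\<bar>) * cmod (v $ i)" .
  then show ?thesis using mpos by (meson mult_le_cancel_right_pos)
qed

lemma spectral_radius_in:
  fixes A :: "real^'n::finite^'n"
  shows "\<exists>z v. v \<noteq> 0 \<and> cpx A *v v = z *s v \<and> spectral_radius A = cmod z"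
    and "\<And>z v. v \<noteq> 0 \<Longrightarrow> cpx A *v v = z *s v \<Longrightarrow> cmod z \<le> spectral_radius A"
proof -
  let ?S = "{z. \<exists>v :: complex^'n. v \<noteq> 0 \<and> cpx A *v v = z *s v}"
  have eq: "{cmod z | z. \<exists>v :: complex^'n. v \<noteq> 0 \<and> (\<chi> i j. complex_of_real (A $ i $ j)) *v v = z *s v} = cmod ` ?S"
    unfolding cpx_def by auto
  have fin: "finite (cmod ` ?S)" using eig_set_finite_nonempty(1)[of "cpx A"] by simp
  have ne: "cmod ` ?S \<noteq> {}" using eig_set_finite_nonempty(2)[of "cpx A"] by simp
  have "spectral_radius A \<in> cmod ` ?S" unfolding spectral_radius_def eq by (rule Max_in[OF fin ne])
  then show "\<exists>z v. v \<noteq> 0 \<and> cpx A *v v = z *s v \<and> spectral_radius A = cmod z" by auto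
  fix z v assume "v \<noteq> (0::complex^'n)" "cpx A *v v = z *s v"
  then have "cmod z \<in> cmod ` ?S" by auto
  then show "cmod z \<le> spectral_radius A" unfolding spectral_radius_def eq by (rule Max_ge[OF fin])
qed

lemma part1:
  fixes A :: "real^'n::finite^'n" and W :: "real^'c::finite^'c"
  shows "spectral_radius A ^ (t - s) / real CARD('n) * spec_norm (mat_pow W (t - s))
                \<le> sensitivity A W B U s t X0"
proof -
  obtain z v where zv: "v \<noteq> 0" "cpx A *v v = z *s v" "spectral_radius A = cmod z"
    using spectral_radius_in(1)[of A] by blast
  obtain i j where ij: "cmod z ^ (t - s) \<le> real CARD('n) * \<bar>mat_pow A (t - s) $ i $ j\<bar>"
    using eig_bound[OF zv(1,2)] by blast
  have n: "real CARD('n) > 0" by simp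
  have "spectral_radius A ^ (t - s) / real CARD('n) \<le> \<bar>mat_pow A (t - s) $ i $ j\<bar>"
    using ij zv(3) n by (simp add: divide_le_eq mult.commute)
  moreover have "0 \<le> spec_norm (mat_pow W (t - s))"
    unfolding spec_norm_def by (rule onorm_pos_le[OF matrix_vector_mul_bounded_linear])
  ultimately have "spectral_radius A ^ (t - s) / real CARD('n) * spec_norm (mat_pow W (t - s))
      \<le> \<bar>mat_pow A (t - s) $ i $ j\<bar> * spec_norm (mat_pow W (t - s))"
    by (rule mult_right_mono)
  also have "\<dots> \<le> sensitivity A W B U s t X0" by (rule sens_ge)
  finally show ?thesis .
qed

lemma sum_if_single2: fixes f :: "'n::finite \<Rightarrow> real"
  shows "(\<Sum>k\<in>UNIV. (if i = k then c else 0) * f k) = c * f i"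
proof -
  have h: "(\<lambda>k. (if i = k then c else 0) * f k) = (\<lambda>k. if i = k then c * f k else 0)" by auto
  show ?thesis by (subst h) (simp only: sum.delta' finite UNIV_I if_True)
qed

lemma cpx_real_vec: "cpx (P::real^'m::finite^'k) *v (\<chi> i. complex_of_real (x $ i)) = (\<chi> i. complex_of_real ((P *v x) $ i))"
  by (simp add: cpx_def Finite_Cartesian_Product.vec_eq_iff matrix_vector_mult_def)

lemma sym_norm_props:
  fixes E :: "'n::finite \<Rightarrow> 'n \<Rightarrow> bool"
  assumes "undirected_graph E"
  shows "graph_shift_operator E (sym_norm_adj E)" and "1 \<le> spectral_radius (sym_norm_adj E)"
proof -
  define M :: "real^'n^'n" where "M = adjacency E + Finite_Cartesian_Product.mat 1"
  define d where "d i = (\<Sum>k\<in>UNIV. M $ i $ k)" for i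
  have Mij: "M $ i $ j = (if E i j then 1 else 0) + (if i = j then 1 else 0)" for i j
    unfolding M_def adjacency_def by (simp add: Finite_Cartesian_Product.mat_def)
  have Mii: "M $ i $ i = 1" for i using assms Mij unfolding undirected_graph_def by simp
  have Mnn: "M $ i $ j \<ge> 0" for i j using Mij by simp
  have d1: "d i \<ge> 1" for i
  proof -
    have "M $ i $ i \<le> d i" unfolding d_def by (rule member_le_sum) (auto simp: Mnn)
    then show ?thesis using Mii by simp
  qed
  have Dm: "diag_inv_sqrt (degree_matrix M) $ i $ j = (if i = j then 1 / sqrt (d i) else 0)" for i j
    unfolding diag_inv_sqrt_def degree_matrix_def d_def by simp
  have A: "sym_norm_adj E $ i $ j = (1 / sqrt (d i)) * M $ i $ j * (1 / sqrt (d j))" for i j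
  proof -
    let ?D = "diag_inv_sqrt (degree_matrix M)"
    have "(?D ** M) $ i $ k = (1 / sqrt (d i)) * M $ i $ k" for k
      unfolding matrix_matrix_mult_def by (simp only: vec_lambda_beta Dm sum_if_single2)
    then have "(?D ** M ** ?D) $ i $ j = (\<Sum>k\<in>UNIV. ((1 / sqrt (d i)) * M $ i $ k) * (if k = j then 1 / sqrt (d k) else 0))"
      unfolding matrix_matrix_mult_def by (simp only: vec_lambda_beta Dm)
    also have "\<dots> = (\<Sum>k\<in>UNIV. ((1 / sqrt (d i)) * M $ i $ k) * (if k = j then 1 / sqrt (d j) else 0))"
      by (intro sum.cong) auto
    also have "\<dots> = (1 / sqrt (d i)) * M $ i $ j * (1 / sqrt (d j))"
      by (rule sum_if_single)
    finally show ?thesis unfolding sym_norm_adj_def M_def Let_def by simp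
  qed
  show "graph_shift_operator E (sym_norm_adj E)"
    unfolding graph_shift_operator_def using A Mij by simp
  define x :: "real^'n" where "x = (\<chi> i. sqrt (d i))"
  have dpos: "d i > 0" for i using d1[of i] by simp
  have Ax: "sym_norm_adj E *v x = x"
  proof -
    have "(sym_norm_adj E *v x) $ i = x $ i" for i
    proof -
      have "(sym_norm_adj E *v x) $ i = (\<Sum>j\<in>UNIV. (1 / sqrt (d i)) * M $ i $ j * (1 / sqrt (d j)) * sqrt (d j))"
        unfolding matrix_vector_mult_def x_def by (simp add: A)
      also have "\<dots> = (\<Sum>j\<in>UNIV. (1 / sqrt (d i)) * M $ i $ j)"
      proof (intro sum.cong refl)
        fix j
        have s: "(1 / sqrt (d j)) * sqrt (d j) = 1" using dpos[of j] by simp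
        show "(1 / sqrt (d i)) * M $ i $ j * (1 / sqrt (d j)) * sqrt (d j) = (1 / sqrt (d i)) * M $ i $ j"
          by (simp only: mult.assoc s mult_1_right)
      qed
      also have "\<dots> = (1 / sqrt (d i)) * d i" unfolding d_def by (rule sum_distrib_left[symmetric])
      also have "\<dots> = x $ i" unfolding x_def using dpos[of i] by (simp add: real_div_sqrt)
      finally show ?thesis .
    qed
    then show ?thesis by (simp add: Finite_Cartesian_Product.vec_eq_iff)
  qed
  define v :: "complex^'n" where "v = (\<chi> i. complex_of_real (x $ i))"
  have "v \<noteq> 0"
  proof
    assume "v = 0"
    then have "v $ undefined = 0" by simp
    then show False using dpos[of undefined] unfolding v_def x_def by simp
  qed
  moreover have "cpx (sym_norm_adj E) *v v = 1 *s v"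
    unfolding v_def cpx_real_vec Ax by simp
  ultimately show "1 \<le> spectral_radius (sym_norm_adj E)"
    using spectral_radius_in(2)[of v "sym_norm_adj E" 1] by simp
qed

theorem theorem3p11:
  fixes E :: "'n::finite \<Rightarrow> 'n \<Rightarrow> bool"
    and A :: "real^'n^'n"
  assumes "graph_connected E"
  shows "(graph_shift_operator E A \<longrightarrow>
           (\<forall>(W :: real^'c::finite^'c) (B :: real^'c^'d::finite) (U :: nat \<Rightarrow> real^'d^'n)
              (X0 :: real^'c^'n) s t. s \<le> t \<longrightarrow>
              spectral_radius A ^ (t - s) / real CARD('n) * spec_norm (mat_pow W (t - s))
                \<le> sensitivity A W B U s t X0))
       \<and> (undirected_graph E \<and> A = sym_norm_adj E \<longrightarrow>
           (\<forall>(W :: real^'c^'c) (B :: real^'c^'d) (U :: nat \<Rightarrow> real^'d^'n)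
              (X0 :: real^'c^'n) s t. s \<le> t \<longrightarrow>
              1 / real CARD('n) * spec_norm (mat_pow W (t - s))
                \<le> sensitivity A W B U s t X0))"
  proof (intro conjI impI allI)
  fix W :: "real^'c::finite^'c" and B :: "real^'c^'d::finite" and U :: "nat \<Rightarrow> real^'d^'n" and X0 :: "real^'c^'n" and s t :: nat
  show "spectral_radius A ^ (t - s) / real CARD('n) * spec_norm (mat_pow W (t - s))
                \<le> sensitivity A W B U s t X0" by (rule part1)
next
  fix W :: "real^'c::finite^'c" and B :: "real^'c^'d::finite" and U :: "nat \<Rightarrow> real^'d^'n" and X0 :: "real^'c^'n" and s t :: nat
  assume h: "undirected_graph E \<and> A = sym_norm_adj E"
  then have r: "1 \<le> spectral_radius A" using sym_norm_props(2) by blast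
  then have "1 \<le> spectral_radius A ^ (t - s)" by (rule one_le_power)
  moreover have "0 \<le> spec_norm (mat_pow W (t - s))"
    unfolding spec_norm_def by (rule onorm_pos_le[OF matrix_vector_mul_bounded_linear])
  ultimately have "1 / real CARD('n) * spec_norm (mat_pow W (t - s))
      \<le> spectral_radius A ^ (t - s) / real CARD('n) * spec_norm (mat_pow W (t - s))"
    by (intro mult_right_mono divide_right_mono) auto
  also have "\<dots> \<le> sensitivity A W B U s t X0" by (rule part1)
  finally show "1 / real CARD('n) * spec_norm (mat_pow W (t - s)) \<le> sensitivity A W B U s t X0" .
qed

end
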